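(* Let $p$ be a prime and $\mathbf{d}=(d_1,\dots,d_l)$ integers with $0\le d_\lambda\le p-1$, and assume $\gamma:=\mathbb{D}_\mathbf{d}-p\ge 0$. Then there is an equality of multisets $$\{\{\,j-\operatorname{sht}(j)\mid 1\le j\le p-1\,\}\}\ \uplus\ \{\{0,-1,\dots,-\gamma\}\}=\Big\{\Big\{\theta\big(\tfrac{s}{r}\big)+i\ \Big|\ \tfrac{s}{r}\in F,\ \gcd(s,r)=1,\ 0\le i\le N_r-1\Big\}\Big\}.$$
   Context: $\mathbb{D}_\mathbf{d}=\sum_\lambda d_\lambda(d_\lambda+1)/2$. $\mathbf{I}^*=\{(\lambda,i)\mid 1\le\lambda\le l,\ 1\le i\le d_\lambda\}$. $\operatorname{sht}(j)=\sum_{(\lambda,i)\in\mathbf{I}^*}\lfloor ij/p\rfloor$ for positive integers $j$. $\theta(y)=1-\lfloor y\rfloor+\lfloor py\rfloor-\sum_{(\lambda,i)\in\mathbf{I}^*}\lfloor iy\rfloor$ for $y\in(0,1]$. $F=\big(\bigcup_{j=1}^{M}\frac1j\mathbb{Z}\big)\cap(0,1]$ with $M=\max_\lambda d_\lambda$, each element written in lowest terms $s/r$. $N_r=\#\{(\lambda,i)\in\mathbf{I}^*\mid r\mid i\}$. $\uplus$ denotes union of multisets (multiplicities add). *)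

theory Defs
  imports Complex_Main "HOL-Library.Multiset" "HOL-Computational_Algebra.Primes"
begin

text \<open>The tuple d = (d_1,...,d_l) is a list; d_m is d ! (m - 1) for 1 \<le> m \<le> length d.\<close>

definition DD :: "nat list \<Rightarrow> nat" where
  "DD d = (\<Sum>m\<in>{1..length d}. d ! (m - 1) * (d ! (m - 1) + 1) div 2)"

definition Istar :: "nat list \<Rightarrow> (nat \<times> nat) set" where
  "Istar d = {(m, i). 1 \<le> m \<and> m \<le> length d \<and> 1 \<le> i \<and> i \<le> d ! (m - 1)}"

definition sht :: "nat \<Rightarrow> nat list \<Rightarrow> nat \<Rightarrow> int" where
  "sht p d j = (\<Sum>(m, i)\<in>Istar d. \<lfloor>(of_nat (i * j) :: rat) / of_nat p\<rfloor>)"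

definition theta :: "nat \<Rightarrow> nat list \<Rightarrow> rat \<Rightarrow> int" where
  "theta p d y = 1 - \<lfloor>y\<rfloor> + \<lfloor>of_nat p * y\<rfloor> - (\<Sum>(m, i)\<in>Istar d. \<lfloor>of_nat i * y\<rfloor>)"

definition Mmax :: "nat list \<Rightarrow> nat" where
  "Mmax d = Max (insert 0 (set d))"

definition Fset :: "nat list \<Rightarrow> rat set" where
  "Fset d = {y. 0 < y \<and> y \<le> 1 \<and> (\<exists>j\<in>{1..Mmax d}. \<exists>k::int. y = of_int k / of_nat j)}"

definition NN :: "nat list \<Rightarrow> nat \<Rightarrow> nat" where
  "NN d r = card {(m, i) \<in> Istar d. r dvd i}"

definition denom :: "rat \<Rightarrow> nat" where
  "denom y = nat (snd (quotient_of y))"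

end

theory Submission
  imports Defs
begin

lemma count_mset_map: "count (mset (map f xs)) v = (\<Sum>x\<leftarrow>xs. if f x = v then 1 else 0)"
  by (induction xs) auto

lemma sum_neg_ind: "(\<Sum>k\<leftarrow>[0..<n]. if - int k = v then 1 else 0) = (if - int n < v \<and> v \<le> 0 then 1 else (0::nat))"
  by (induction n) auto

lemma sum_shift_ind: "(\<Sum>i\<leftarrow>[0..<n]. if t + int i = v then 1 else 0) = (if t \<le> v \<and> v < t + int n then 1 else (0::nat))"
  by (induction n) auto

lemma div_step: assumes "(c::nat) > 0" "k \<ge> 1"
  shows "int (k div c) - int ((k-1) div c) = (if c dvd k then 1 else 0)"
proof -
  obtain k' where k: "k = Suc k'" using assms(2) by (cases k) auto
  show ?thesis unfolding k using div_Suc[of k' c] by (auto simp: dvd_eq_mod_eq_0)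
qed

lemma denom_dvd_iff:
  assumes "(Q::nat) > 0"
  shows "(denom (of_nat k / of_nat Q) dvd i) \<longleftrightarrow> (Q dvd i*k)"
proof -
  obtain s r where q: "quotient_of (of_nat k / of_nat Q) = (s, r)" by (cases "quotient_of (of_nat k / of_nat Q)")
  have r0: "r > 0" using quotient_of_denom_pos[OF q] .
  have cop: "coprime r s" using quotient_of_coprime[OF q] by (simp add: coprime_commute)
  have "(of_nat k / of_nat Q :: rat) = of_int s / of_int r" using quotient_of_div[OF q] .
  then have "(of_int (int k * r) :: rat) = of_int (s * int Q)" using assms r0
    by (simp add: field_simps)
  then have e: "int k * r = s * int Q" by (simp only: of_int_eq_iff)
  have "denom (of_nat k / of_nat Q) = nat r" by (simp add: denom_def q)
  then have "(denom (of_nat k / of_nat Q) dvd i) \<longleftrightarrow> r dvd int i" using r0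
    by (metis int_dvd_int_iff int_nat_eq less_le)
  also have "\<dots> \<longleftrightarrow> r dvd int i * s" using cop by (simp add: coprime_dvd_mult_left_iff)
  also have "\<dots> \<longleftrightarrow> int Q * r dvd int i * s * int Q" using assms by (simp add: mult.commute)
  also have "int i * s * int Q = int i * int k * r" using e by (simp add: algebra_simps)
  also have "int Q * r dvd int i * int k * r \<longleftrightarrow> int Q dvd int i * int k" using r0 by simp
  also have "\<dots> \<longleftrightarrow> Q dvd i * k" by (metis of_nat_dvd_iff of_nat_mult)
  finally show ?thesis .
qed

theorem mainTheorem4:
  fixes p :: nat and d :: "nat list"
  assumes "prime p"
    and "\<forall>x\<in>set d. x \<le> p - 1"
    and "int (DD d) - int p \<ge> 0"
  shows "mset (map (\<lambda>j. int j - sht p d j) [1..<p])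
           + mset (map (\<lambda>k. - int k) [0..<DD d - p + 1])
         = (\<Sum>y\<in>Fset d. mset (map (\<lambda>i. theta p d y + int i) [0..<NN d (denom y)]))"
proof -
  define I where "I = Istar d"
  define M where "M = Mmax d"
  define B :: nat where "B = fact M"
  define Q where "Q = p * B"
  define F where "F = Fset d"
  have p1: "p > 1" using prime_gt_1_nat assms(1) by blast
  have Isig: "I = Sigma {1..length d} (\<lambda>m. {1..d!(m-1)})" by (auto simp: I_def Istar_def)
  have finI: "finite I" unfolding Isig by auto
  have Mp: "M < p"
  proof -
    have "\<forall>x\<in>insert 0 (set d). x \<le> p - 1" using assms(2) by auto
    then have "M \<le> p - 1" unfolding M_def Mmax_def by simp
    then show ?thesis using p1 by simp
  qed
  have iM: "1 \<le> i \<and> i \<le> M" if "(m,i) \<in> I" for m i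
  proof -
    have "m - 1 < length d" "i \<le> d!(m-1)" "1 \<le> i" using that by (auto simp: I_def Istar_def)
    then have "d!(m-1) \<in> insert 0 (set d)" by simp
    then have "d!(m-1) \<le> M" unfolding M_def Mmax_def by simp
    then show ?thesis using \<open>i \<le> d!(m-1)\<close> \<open>1 \<le> i\<close> by simp
  qed
  have Bpos: "B > 0" by (simp add: B_def)
  have Qpos: "Q > 0" using Bpos p1 by (simp add: Q_def)
  have dvdB: "j dvd B" if "1 \<le> j" "j \<le> M" for j using that by (simp add: B_def dvd_fact)
  have DDsum: "DD d = (\<Sum>(m,i)\<in>I. i)"
  proof -
    have "(\<Sum>(m,i)\<in>I. i) = (\<Sum>m\<in>{1..length d}. \<Sum>i\<in>{1..d!(m-1)}. i)"
      unfolding Isig by (simp add: sum.Sigma)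
    also have "\<dots> = (\<Sum>m\<in>{1..length d}. d ! (m - 1) * (d ! (m - 1) + 1) div 2)"
      by (simp add: Sum_Icc_nat)
    finally show ?thesis by (simp add: DD_def)
  qed
  have DDp: "p \<le> DD d" using assms(3) by simp

  define H where "H k = int ((p*k) div Q) - (\<Sum>(m,i)\<in>I. int ((i*k) div Q))" for k
  define G where "G k = H k - (if k = Q then 1 else 0)" for k
  define N where "N k = card {(m,i)\<in>I. Q dvd i*k}" for k
  define up where "up k = (B dvd k \<and> k < Q)" for k

  have Ncard: "int (N k) = (\<Sum>(m,i)\<in>I. if Q dvd i*k then 1 else 0)" for k
  proof -
    have e: "{(m,i)\<in>I. Q dvd i*k} = {x\<in>I. case x of (m,i) \<Rightarrow> Q dvd i*k}" by auto
    have "N k = (\<Sum>x\<in>{x\<in>I. case x of (m,i) \<Rightarrow> Q dvd i*k}. 1)" unfolding N_def e by simp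
    also have "\<dots> = (\<Sum>x\<in>I. if (case x of (m,i) \<Rightarrow> Q dvd i*k) then 1 else 0)"
      using sum.inter_filter[OF finI] by blast
    finally have "int (N k) = int (\<Sum>x\<in>I. if (case x of (m,i) \<Rightarrow> Q dvd i*k) then 1 else 0)" by simp
    also have "\<dots> = (\<Sum>x\<in>I. int (if (case x of (m,i) \<Rightarrow> Q dvd i*k) then 1 else 0))" by (rule of_nat_sum)
    finally show ?thesis by (auto simp: case_prod_beta intro!: sum.cong)
  qed
  have Hstep: "H k - H (k-1) = (if B dvd k then 1 else 0) - int (N k)" if "1 \<le> k" for k
  proof -
    have pk: "(p*k) div Q = k div B" for k using p1 by (simp add: Q_def)
    have ik: "int ((i*k) div Q) - int ((i*(k-1)) div Q) = (if Q dvd i*k then 1 else 0)"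
      if "(m,i) \<in> I" for m i
    proof -
      have i1: "1 \<le> i" "i \<le> M" using iM[OF that] by auto
      obtain c where c: "B = i * c" using dvdB[OF i1] by (auto elim: dvdE)
      have c0: "p*c > 0" using Bpos p1 c by simp
      have Qc: "Q = i * (p*c)" by (simp add: Q_def c)
      have "(i*k) div Q = k div (p*c)" "(i*(k-1)) div Q = (k-1) div (p*c)" using i1 by (simp_all add: Qc)
      moreover have "Q dvd i*k \<longleftrightarrow> (p*c) dvd k" using i1 by (simp add: Qc)
      ultimately show ?thesis using div_step[OF c0 \<open>1 \<le> k\<close>] by simp
    qed
    have "H k - H (k-1) = (int (k div B) - int ((k-1) div B)) - (\<Sum>(m,i)\<in>I. int ((i*k) div Q) - int ((i*(k-1)) div Q))"
      by (simp add: H_def pk sum_subtractf case_prod_beta)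
    also have "\<dots> = (if B dvd k then 1 else 0) - (\<Sum>(m,i)\<in>I. if Q dvd i*k then 1 else 0)"
      using div_step[OF Bpos \<open>1 \<le> k\<close>] ik by (auto intro!: sum.cong)
    finally show ?thesis using Ncard by simp
  qed
  have Nup: "N k = 0" if upk: "up k" and k1: "1 \<le> k" for k
  proof (rule ccontr)
    assume "N k \<noteq> 0"
    then have "{(m,i)\<in>I. Q dvd i*k} \<noteq> {}" unfolding N_def by (metis card.empty)
    then obtain m i where mi: "(m,i) \<in> I" "Q dvd i*k" by auto
    obtain t where t: "k = B*t" using upk unfolding up_def by (auto elim: dvdE)
    have t1: "1 \<le> t" "t < p" using upk k1 t Bpos unfolding up_def Q_def by (auto simp: mult.commute)
    have "p*B dvd (i*t)*B" using mi(2) t by (simp add: Q_def algebra_simps)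
    then have "p dvd i*t" using Bpos by simp
    then have "p dvd i \<or> p dvd t" using assms(1) prime_dvd_mult_iff by blast
    moreover have "1 \<le> i" "i < p" using iM[OF mi(1)] Mp by auto
    ultimately show False using t1 by (auto dest: dvd_imp_le)
  qed
  have NQ: "N Q = card I" by (simp add: N_def)
  have Gstep: "G k - G (k-1) = (if up k then 1 else - int (N k))" if "k \<in> {1..Q}" for k
  proof (cases "k = Q")
    case True
    have "B dvd Q" by (simp add: Q_def)
    then show ?thesis using True Hstep[of k] that Qpos NQ by (simp add: G_def up_def)
  next
    case False
    then show ?thesis using Hstep[of k] that Nup[of k] by (auto simp: G_def up_def)
  qed
  have G0: "G 0 = 0" using Qpos by (simp add: G_def H_def)
  have GQ: "G Q = int p - int (DD d) - 1"
  proof -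
    have "H Q = int p - (\<Sum>(m,i)\<in>I. int i)" using Qpos by (simp add: H_def case_prod_beta)
    also have "(\<Sum>(m,i)\<in>I. int i) = int (DD d)" by (simp add: DDsum of_nat_sum case_prod_beta)
    finally show ?thesis by (simp add: G_def)
  qed
  define h where "h k = (of_nat k / of_nat Q :: rat)" for k
  have hF_rev: "h k \<in> F" if "N k \<noteq> 0" "k \<in> {1..Q}" for k
  proof -
    have "{(m,i)\<in>I. Q dvd i*k} \<noteq> {}" using that(1) unfolding N_def by (metis card.empty)
    then obtain m i where mi: "(m,i) \<in> I" "Q dvd i*k" by auto
    obtain e where e: "i*k = Q*e" using mi(2) by (auto elim: dvdE)
    have i1: "1 \<le> i" "i \<le> M" using iM[OF mi(1)] by auto
    have "(of_nat (i*k) :: rat) = of_nat (Q*e)" using e by simp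
    then have "h k = of_int (int e) / of_nat i" using i1 Qpos by (simp add: h_def field_simps)
    moreover have "0 < h k" "h k \<le> 1" using that(2) Qpos by (auto simp: h_def)
    moreover have "\<exists>j\<in>{1..Mmax d}. \<exists>a::int. h k = of_int a / of_nat j"
      using calculation(1) i1 unfolding M_def by (intro bexI[of _ i] exI[of _ "int e"]) auto
    ultimately show ?thesis unfolding F_def Fset_def by auto
  qed
  have theta_eq: "theta p d (h k) = G k + 1" if "k \<in> {1..Q}" for k
  proof -
    have fl: "\<lfloor>of_nat a * h k\<rfloor> = int ((a*k) div Q)" for a
    proof -
      have "of_nat a * h k = of_nat (a*k) / (of_nat Q :: rat)" by (simp add: h_def)
      then show ?thesis by (simp only: floor_divide_of_nat_eq)
    qed
    have f1: "\<lfloor>h k\<rfloor> = (if k = Q then 1 else 0)"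
    proof -
      have "\<lfloor>h k\<rfloor> = int (k div Q)" using fl[of 1] by simp
      moreover have "k div Q = (if k = Q then 1 else 0)" using that Qpos by auto
      ultimately show ?thesis by simp
    qed
    show ?thesis unfolding theta_def G_def H_def f1 fl I_def[symmetric] by (simp add: case_prod_beta)
  qed
  have NN_eq: "NN d (denom (h k)) = N k" for k
  proof -
    have "{(m, i) \<in> Istar d. denom (h k) dvd i} = {(m,i)\<in>I. Q dvd i*k}"
      using denom_dvd_iff[OF Qpos, of k] by (auto simp: h_def I_def)
    then show ?thesis by (simp add: NN_def N_def)
  qed
  define R' where "R' = {k\<in>{1..Q} \<inter> - {k. up k}. h k \<in> F}"
  have bij: "bij_betw h R' F"
  proof (rule bij_betw_imageI)
    show "inj_on h R'" using Qpos by (auto simp: inj_on_def h_def)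
    show "h ` R' = F"
    proof
      show "h ` R' \<subseteq> F" by (auto simp: R'_def)
      show "F \<subseteq> h ` R'"
      proof
        fix y assume yF: "y \<in> F"
        then obtain j a where ja: "0 < y" "y \<le> 1" "1 \<le> j" "j \<le> M" "y = of_int a / of_nat j"
          unfolding F_def Fset_def M_def by auto
        have "j dvd Q" using dvdB[OF ja(3,4)] by (simp add: Q_def)
        then obtain q where q: "Q = j*q" by (auto elim: dvdE)
        have q0: "q > 0" using Qpos q by simp
        have a0: "a > 0" using ja(1,3,5) by (simp add: zero_less_divide_iff)
        define k where "k = nat a * q"
        have hk: "h k = y"
        proof -
          have "(of_nat (nat a) :: rat) = of_int a" using a0 by simp
          then show ?thesis using ja q q0 by (simp add: h_def k_def q field_simps)
        qed
        have k1: "1 \<le> k" using a0 q0 by (simp add: k_def)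
        have "(of_nat k :: rat) / of_nat Q \<le> 1" using hk ja(2) by (simp add: h_def)
        then have "(of_nat k :: rat) \<le> of_nat Q" using Qpos by (simp add: divide_le_eq_1)
        then have kQ: "k \<le> Q" by simp
        have nup: "\<not> up k"
        proof
          assume "up k"
          then obtain t where t: "k = B*t" "k < Q" unfolding up_def by (auto elim: dvdE)
          have t1: "1 \<le> t" "t < p" using t k1 Bpos by (auto simp: Q_def mult.commute)
          have "h k = of_nat t / of_nat p" using Bpos by (simp add: h_def t Q_def)
          then have "(of_nat t / of_nat p :: rat) = of_int a / of_nat j" using hk ja by simp
          then have "(of_int (int t * int j) :: rat) = of_int (a * int p)" using p1 ja(3)
            by (simp add: field_simps)
          then have "int t * int j = a * int p" by (simp only: of_int_eq_iff)
          then have "int p dvd int (t*j)" by simp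
          then have "p dvd t*j" by (simp only: int_dvd_int_iff)
          then have "p dvd t \<or> p dvd j" using assms(1) prime_dvd_mult_iff by blast
          then show False using t1 ja(3,4) Mp by (auto dest: dvd_imp_le)
        qed
        show "y \<in> h ` R'" using hk k1 kQ nup yF by (auto simp: R'_def intro!: image_eqI[of _ _ k])
      qed
    qed
  qed
  show ?thesis
  proof (rule multiset_eqI)
    fix v
    define c where "c k = (if v \<le> G k then 1 else 0 :: int)" for k
    define g where "g k = (if G k < v \<and> v \<le> G k + int (N k) then 1 else 0 :: int)" for k
    define e where "e k = (if G k = v then 1 else 0 :: int)" for k
    define gF where "gF y = (if theta p d y \<le> v \<and> v < theta p d y + int (NN d (denom y)) then 1 else 0 :: int)" for y
    define U where "U = {1..Q} \<inter> {k. up k}"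
    define R where "R = {1..Q} \<inter> - {k. up k}"
    have tele: "(\<Sum>k\<in>{1..Q}. c k - c (k-1)) = c Q - c 0"
    proof -
      have Qs: "Q = Suc (Q-1)" using Qpos by simp
      have iv: "{1..Q} = {Suc 0..Suc (Q-1)}" using Qs by simp
      have "(\<Sum>k\<in>{1..Q}. c k - c (k-1)) = (\<Sum>i\<in>{0..Q-1}. c (Suc i) - c i)"
        unfolding iv sum.shift_bounds_cl_Suc_ivl by simp
      also have "\<dots> = c (Suc (Q-1)) - c 0" by (rule sum_Suc_diff) simp
      finally show ?thesis using Qs by simp
    qed
    have cstep: "c k - c (k-1) = (if up k then e k else - g k)" if "k \<in> {1..Q}" for k
      using Gstep[OF that] by (auto simp: c_def e_def g_def split: if_splits)
    have split: "(\<Sum>k\<in>{1..Q}. c k - c (k-1)) = (\<Sum>k\<in>U. e k) - (\<Sum>k\<in>R. g k)"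
    proof -
      have "(\<Sum>k\<in>{1..Q}. c k - c (k-1)) = (\<Sum>k\<in>{1..Q}. if up k then e k else - g k)"
        by (rule sum.cong[OF refl]) (rule cstep)
      also have "\<dots> = (\<Sum>k\<in>U. e k) + (\<Sum>k\<in>R. - g k)"
        unfolding U_def R_def by (rule sum.If_cases) simp
      finally show ?thesis by (simp add: sum_negf)
    qed
    have cQ0: "c Q - c 0 = - (if int p - int (DD d) \<le> v \<and> v \<le> 0 then 1 else 0)"
      using GQ G0 DDp by (auto simp: c_def)
    have Usum: "(\<Sum>k\<in>U. e k) = (\<Sum>j\<in>{1..<p}. if int j - sht p d j = v then 1 else 0)"
    proof -
      have Ueq: "U = (\<lambda>j. j*B) ` {1..<p}"
      proof
        show "U \<subseteq> (\<lambda>j. j*B) ` {1..<p}"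
        proof
          fix k assume "k \<in> U"
          then have k: "1 \<le> k" "k < Q" "B dvd k" by (auto simp: U_def up_def)
          then obtain t where t: "k = B*t" by (auto elim: dvdE)
          have "1 \<le> t" "t < p" using t k Bpos by (auto simp: Q_def mult.commute)
          then show "k \<in> (\<lambda>j. j*B) ` {1..<p}" using t by (auto simp: mult.commute)
        qed
        show "(\<lambda>j. j*B) ` {1..<p} \<subseteq> U" using Bpos by (auto simp: U_def up_def Q_def)
      qed
      have inj: "inj_on (\<lambda>j. j*B) {1..<p}" using Bpos by (auto simp: inj_on_def)
      have Gj: "G (j*B) = int j - sht p d j" if "j \<in> {1..<p}" for j
      proof -
        have "j*B \<noteq> Q" using that Bpos by (auto simp: Q_def)
        moreover have "(p*(j*B)) div Q = j" using Bpos p1 by (simp add: Q_def)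
        moreover have "(i*(j*B)) div Q = (i*j) div p" for i using Bpos by (simp add: Q_def)
        moreover have "sht p d j = (\<Sum>(m,i)\<in>I. int ((i*j) div p))"
          unfolding sht_def I_def by (simp only: floor_divide_of_nat_eq)
        ultimately show ?thesis by (simp add: G_def H_def)
      qed
      show ?thesis unfolding Ueq sum.reindex[OF inj] by (rule sum.cong) (simp_all add: e_def Gj)
    qed
    have Rsum: "(\<Sum>k\<in>R. g k) = (\<Sum>y\<in>F. gF y)"
    proof -
      have "(\<Sum>k\<in>R. g k) = (\<Sum>k\<in>R'. g k)"
      proof (rule sum.mono_neutral_right)
        show "finite R" by (simp add: R_def)
        show "R' \<subseteq> R" by (auto simp: R_def R'_def)
        show "\<forall>k\<in>R - R'. g k = 0"
        proof
          fix k assume k: "k \<in> R - R'"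
          then have "N k = 0" using hF_rev[of k] by (auto simp: R_def R'_def)
          then show "g k = 0" by (simp add: g_def)
        qed
      qed
      also have "\<dots> = (\<Sum>k\<in>R'. gF (h k))"
        by (rule sum.cong) (auto simp: R'_def g_def gF_def theta_eq NN_eq)
      also have "\<dots> = (\<Sum>y\<in>F. gF y)" by (rule sum.reindex_bij_betw[OF bij])
      finally show ?thesis .
    qed
    have LHS: "int (count (mset (map (\<lambda>j. int j - sht p d j) [1..<p])
           + mset (map (\<lambda>k. - int k) [0..<DD d - p + 1])) v)
       = (\<Sum>j\<in>{1..<p}. if int j - sht p d j = v then 1 else 0) + (if int p - int (DD d) \<le> v \<and> v \<le> 0 then 1 else 0)"
    proof -
      have a: "count (mset (map (\<lambda>j. int j - sht p d j) [1..<p])) v = (\<Sum>j\<in>{1..<p}. if int j - sht p d j = v then 1 else 0)"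
        unfolding count_mset_map interv_sum_list_conv_sum_set_nat set_upt ..
      have b: "count (mset (map (\<lambda>k. - int k) [0..<DD d - p + 1])) v = (if int p - int (DD d) \<le> v \<and> v \<le> 0 then 1 else 0)"
        unfolding count_mset_map sum_neg_ind using DDp by auto
      show ?thesis unfolding count_union a b of_nat_add of_nat_sum by (auto intro!: sum.cong)
    qed
    have RHS: "int (count (\<Sum>y\<in>Fset d. mset (map (\<lambda>i. theta p d y + int i) [0..<NN d (denom y)])) v)
        = (\<Sum>y\<in>F. gF y)"
      unfolding count_sum count_mset_map sum_shift_ind of_nat_sum F_def gF_def
      by (rule sum.cong) auto
    show "count (mset (map (\<lambda>j. int j - sht p d j) [1..<p])
           + mset (map (\<lambda>k. - int k) [0..<DD d - p + 1])) v =
          count (\<Sum>y\<in>Fset d. mset (map (\<lambda>i. theta p d y + int i) [0..<NN d (denom y)])) v"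
      using LHS RHS Usum Rsum split tele cQ0 by linarith
  qed
qed

end
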